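(* There exist a unique length-preserving map $u\mapsto w_u$ from $\{0,1,2\}^*$ to $\{0,1\}^*$ and a unique map $u\mapsto s_u$ from $\{0,1,2\}^*$ to $\mathcal{S}$ such that for every $u\in\{0,1,2\}^*$: $w_u$ is a prefix of $w_{ua}$ for every $a\in\{0,1,2\}$, and $\mathrm{val}_{\mathcal{F}}(u)=\mathrm{val}_{\mathcal{F}}(w_us_u)$. Moreover, there is a unique map $\lambda:\{0,1,2\}^+\to\{0,1\}$, $v\mapsto\lambda_v$, such that $w_{ua}=w_u\lambda_{ua}$ for every $u\in\{0,1,2\}^*$ and $a\in\{0,1,2\}$.
   Context: Fibonacci numbers: $F_0=1$, $F_1=2$, $F_n=F_{n-1}+F_{n-2}$ for $n\ge2$. For a word $w=w_{k-1}\cdots w_0$ over $\{0,1,2\}$ (digits indexed from the right), $\mathrm{val}_{\mathcal{F}}(w)=\sum_{i=0}^{k-1}w_iF_i$. $\mathcal{S}=\{000,001,010,100,101\}$. *)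

theory Defs
  imports Main "HOL-Library.Sublist"
begin

fun fibF :: "nat \<Rightarrow> nat" where
  "fibF 0 = 1"
| "fibF (Suc 0) = 2"
| "fibF (Suc (Suc n)) = fibF (Suc n) + fibF n"

text \<open>Words are lists written left to right, w = w_{k-1} ... w_0; the last list
  element is the digit of index 0. valF w = sum of w_i * F i.\<close>
fun valF :: "nat list \<Rightarrow> nat" where
  "valF [] = 0"
| "valF (d # ds) = d * fibF (length ds) + valF ds"

definition words3 :: "nat list set" where
  "words3 = {u. set u \<subseteq> {0, 1, 2}}"

definition words2 :: "nat list set" where
  "words2 = {u. set u \<subseteq> {0, 1}}"

definition Sset :: "nat list set" where
  "Sset = {[0,0,0], [0,0,1], [0,1,0], [1,0,0], [1,0,1]}"

definition good_ws :: "(nat list \<Rightarrow> nat list) \<Rightarrow> (nat list \<Rightarrow> nat list) \<Rightarrow> bool" where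
  "good_ws w s \<longleftrightarrow>
     (\<forall>u \<in> words3.
        w u \<in> words2 \<and> length (w u) = length u \<and> s u \<in> Sset \<and>
        (\<forall>a \<in> {0, 1, 2}. prefix (w u) (w (u @ [a]))) \<and>
        valF u = valF (w u @ s u))"

end

theory Submission
  imports Defs
begin

fun fibG :: "nat \<Rightarrow> nat" where
  "fibG 0 = 1"
| "fibG (Suc n) = fibF n"

lemma fibF_Suc: "fibF (Suc n) = fibF n + fibG n"
  by (cases n) auto

fun valG :: "nat list \<Rightarrow> nat" where
  "valG [] = 0"
| "valG (d # ds) = d * fibG (length ds) + valG ds"

lemma valF_snoc: "valF (x @ [d]) = valF x + valG x + d"
  by (induction x) (auto simp: fibF_Suc algebra_simps)

lemma valG_snoc: "valG (x @ [d]) = valF x + d"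
  by (induction x) auto

lemma valF_zero: "valF (map (\<lambda>_. 0) y) = 0"
  by (induction y) auto

lemma valG_zero: "valG (map (\<lambda>_. 0) y) = 0"
  by (induction y) auto

lemma valF_app: "valF (x @ y) = valF (x @ map (\<lambda>_. 0) y) + valF y"
  by (induction x) (auto simp: valF_zero)

lemma valG_app: "valG (x @ y) = valG (x @ map (\<lambda>_. 0) y) + valG y"
  by (induction x) (auto simp: valG_zero)

fun R :: "nat list \<Rightarrow> int \<times> int \<times> nat list" where
  "R [] = (0, 0, [])"
| "R (a # r) = (case R r of (A, B, w) \<Rightarrow>
     (let t = A + B + int a; b = (if t < 5 then 0 else 1::nat)
      in (t - 5 * int b, A + int a - 3 * int b, w @ [b])))"

definition P :: "(int \<times> int) set" where
  "P = {(0, 0), (0, 1), (1, 0), (1, 1), (2, 1), (2, 2), (3, 2), (3, 3), (4, 2), (4, 3)}"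

lemma transP:
  assumes "(A, B) \<in> P" "(a::nat) < 3"
  shows "0 \<le> A + B + int a \<and> A + B + int a \<le> 9 \<and>
    (let t = A + B + int a; b = (if t < 5 then 0 else 1::nat)
     in (t - 5 * int b, A + int a - 3 * int b) \<in> P)"
proof -
  have h: "a = 0 \<or> a = 1 \<or> a = 2" using assms(2) by auto
  have "(A = 0 \<and> B = 0) \<or> (A = 0 \<and> B = 1) \<or> (A = 1 \<and> B = 0) \<or> (A = 1 \<and> B = 1) \<or> (A = 2 \<and> B = 1) \<or>
        (A = 2 \<and> B = 2) \<or> (A = 3 \<and> B = 2) \<or> (A = 3 \<and> B = 3) \<or> (A = 4 \<and> B = 2) \<or> (A = 4 \<and> B = 3)"
    using assms(1) unfolding P_def by simp
  then show ?thesis using h by (elim disjE conjE; simp add: Let_def P_def)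
qed

lemma P_range: "(A, B) \<in> P \<Longrightarrow> 0 \<le> A \<and> A \<le> 4"
  unfolding P_def by auto

definition W :: "nat list \<Rightarrow> nat list" where
  "W u = snd (snd (R (rev u)))"

definition sel :: "int \<Rightarrow> nat list" where
  "sel A = (if A = 0 then [0,0,0] else if A = 1 then [0,0,1] else if A = 2 then [0,1,0]
            else if A = 3 then [1,0,0] else [1,0,1])"

definition S :: "nat list \<Rightarrow> nat list" where
  "S u = sel (fst (R (rev u)))"

lemma sel_props: "0 \<le> A \<Longrightarrow> A \<le> 4 \<Longrightarrow> sel A \<in> Sset \<and> int (valF (sel A)) = A \<and> length (sel A) = 3"
  unfolding sel_def Sset_def by (auto simp: numeral_eq_Suc)

lemma Sset_props: "s \<in> Sset \<Longrightarrow> valF s \<le> 4 \<and> s = sel (int (valF s)) \<and> length s = 3"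
  unfolding sel_def Sset_def by (auto simp: numeral_eq_Suc)

lemma shiftF: "valF (w @ [b, 0, 0, 0]) = valF (w @ [0,0,0]) + valG (w @ [0,0,0]) + 5 * b"
proof -
  have "valF (w @ [b, 0, 0, 0]) = valF (w @ [0,0,0,0]) + valF [b,0,0,0]"
    using valF_app[of w "[b,0,0,0]"] by simp
  also have "valF (w @ [0,0,0,0]) = valF ((w @ [0,0,0]) @ [0])" by simp
  also have "\<dots> = valF (w @ [0,0,0]) + valG (w @ [0,0,0])" using valF_snoc[of "w@[0,0,0]" 0] by simp
  finally show ?thesis by (simp add: numeral_eq_Suc)
qed

lemma shiftG: "valG (w @ [b, 0, 0, 0]) = valF (w @ [0,0,0]) + 3 * b"
proof -
  have "valG (w @ [b, 0, 0, 0]) = valG (w @ [0,0,0,0]) + valG [b,0,0,0]"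
    using valG_app[of w "[b,0,0,0]"] by simp
  also have "valG (w @ [0,0,0,0]) = valG ((w @ [0,0,0]) @ [0])" by simp
  also have "\<dots> = valF (w @ [0,0,0])" using valG_snoc[of "w@[0,0,0]" 0] by simp
  finally show ?thesis by (simp add: numeral_eq_Suc)
qed

lemma inv:
  "set u \<subseteq> {0,1,2} \<Longrightarrow> R (rev u) = (A, B, wr) \<Longrightarrow>
   (A, B) \<in> P \<and> set wr \<subseteq> {0,1} \<and> length wr = length u \<and>
   int (valF u) = int (valF (wr @ [0,0,0])) + A \<and>
   int (valG u) = int (valG (wr @ [0,0,0])) + B"
proof (induction u arbitrary: A B wr rule: rev_induct)
  case Nil
  then show ?case by (auto simp: P_def)
next
  case (snoc a u)
  obtain A0 B0 w0 where R0: "R (rev u) = (A0, B0, w0)" by (cases "R (rev u)") auto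
  have IH: "(A0, B0) \<in> P \<and> set w0 \<subseteq> {0,1} \<and> length w0 = length u \<and>
   int (valF u) = int (valF (w0 @ [0,0,0])) + A0 \<and>
   int (valG u) = int (valG (w0 @ [0,0,0])) + B0" using snoc R0 by auto
  have a3: "a < 3" using snoc.prems(1) by auto
  define t where "t = A0 + B0 + int a"
  define b where "b = (if t < 5 then 0 else 1::nat)"
  have RR: "R (rev (u @ [a])) = (t - 5 * int b, A0 + int a - 3 * int b, w0 @ [b])"
    using R0 by (simp add: t_def b_def Let_def)
  have tr: "(t - 5 * int b, A0 + int a - 3 * int b) \<in> P"
    using transP[OF _ a3, of A0 B0] IH by (simp add: t_def b_def Let_def)
  have eqs: "A = t - 5 * int b" "B = A0 + int a - 3 * int b" "wr = w0 @ [b]"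
    using RR snoc.prems(2) by auto
  have f1: "valF (wr @ [0,0,0]) = valF (w0 @ [0,0,0]) + valG (w0 @ [0,0,0]) + 5 * b"
    using shiftF[of w0 b] eqs by simp
  have f2: "valG (wr @ [0,0,0]) = valF (w0 @ [0,0,0]) + 3 * b"
    using shiftG[of w0 b] eqs by simp
  have "int (valF (u @ [a])) = int (valF u) + int (valG u) + int a"
    by (simp add: valF_snoc)
  moreover have "int (valG (u @ [a])) = int (valF u) + int a"
    by (simp add: valG_snoc)
  ultimately show ?case using IH tr eqs f1 f2
    by (auto simp: t_def b_def)
qed

lemma W_snoc: "\<exists>b. W (u @ [a]) = W u @ [b]"
  unfolding W_def by (cases "R (rev u)") (auto simp: Let_def)

lemma inv': "u \<in> words3 \<Longrightarrow>
   (fst (R (rev u)), fst (snd (R (rev u)))) \<in> P \<and> W u \<in> words2 \<and> length (W u) = length u \<and>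
   int (valF u) = int (valF (W u @ [0,0,0])) + fst (R (rev u)) \<and>
   int (valG u) = int (valG (W u @ [0,0,0])) + fst (snd (R (rev u)))"
  using inv[of u "fst (R (rev u))" "fst (snd (R (rev u)))" "W u"]
  unfolding W_def words3_def words2_def by auto

lemma good_W: "good_ws W S"
  unfolding good_ws_def
proof (rule ballI, intro conjI)
  fix u assume u: "u \<in> words3"
  note I = inv'[OF u]
  have r: "0 \<le> fst (R (rev u)) \<and> fst (R (rev u)) \<le> 4" using I P_range by (metis prod.collapse)
  note sp = sel_props[OF conjunct1[OF r] conjunct2[OF r]]
  show "W u \<in> words2" "length (W u) = length u" using I by auto
  show "S u \<in> Sset" using sp by (simp add: S_def)
  show "\<forall>a\<in>{0, 1, 2}. prefix (W u) (W (u @ [a]))"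
    using W_snoc by (auto intro: prefixI)
  have "map (\<lambda>_. 0::nat) (S u) = [0,0,0]" using sp
    by (simp add: S_def map_replicate_const numeral_eq_Suc)
  then have "valF (W u @ S u) = valF (W u @ [0,0,0]) + valF (S u)"
    using valF_app[of "W u" "S u"] by simp
  then show "valF u = valF (W u @ S u)" using I sp by (simp add: S_def)
qed

lemma uniq: "good_ws w s \<Longrightarrow> u \<in> words3 \<Longrightarrow> w u = W u \<and> s u = S u"
proof (induction u rule: rev_induct)
  case Nil
  have g: "length (w []) = 0" "s [] \<in> Sset" "valF [] = valF (w [] @ s [])"
    using Nil unfolding good_ws_def by auto
  then have "w [] = []" by auto
  with g have "valF (s []) = 0" by simp
  then have "s [] = sel 0" using Sset_props[OF g(2)] by simp
  then show ?case using \<open>w [] = []\<close> by (simp add: W_def S_def)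
next
  case (snoc a u)
  have uw: "u \<in> words3" "a \<in> {0,1,2}" using snoc.prems(2) unfolding words3_def by auto
  have IH: "w u = W u" "s u = S u" using snoc uw by auto
  have g: "length (w (u@[a])) = length u + 1" "s (u@[a]) \<in> Sset"
    "valF (u@[a]) = valF (w (u@[a]) @ s (u@[a]))" "prefix (w u) (w (u@[a]))"
    "w (u@[a]) \<in> words2"
    using snoc.prems uw unfolding good_ws_def by auto
  obtain c where c: "w (u@[a]) = W u @ [c]"
  proof -
    obtain z where "w (u@[a]) = w u @ z" using g(4) by (auto simp: prefix_def)
    moreover have "length (w u) = length u" using snoc.prems(1) uw unfolding good_ws_def by auto
    ultimately have "length z = 1" using g(1) by simp
    then obtain c where "z = [c]" by (cases z) auto
    then show ?thesis using that IH \<open>w (u@[a]) = w u @ z\<close> by simp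
  qed
  have c01: "c \<in> {0,1}" using g(5) c unfolding words2_def by auto
  obtain A0 B0 w0 where R0: "R (rev u) = (A0, B0, w0)" by (cases "R (rev u)") auto
  have w0: "W u = w0" using R0 by (simp add: W_def)
  note I = inv'[OF uw(1)]
  have I0: "(A0,B0) \<in> P" "int (valF u) = int (valF (w0 @ [0,0,0])) + A0"
    "int (valG u) = int (valG (w0 @ [0,0,0])) + B0" using I R0 w0 by auto
  define s' where "s' = s (u@[a])"
  note sp = Sset_props[OF g(2)[folded s'_def]]
  have "map (\<lambda>_. 0::nat) s' = [0,0,0]" using sp
    by (simp add: map_replicate_const numeral_eq_Suc)
  then have "valF ((w0 @ [c]) @ s') = valF ((w0 @ [c]) @ [0,0,0]) + valF s'"
    using valF_app[of "w0 @ [c]" s'] by simp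
  then have e1: "valF (w0 @ [c] @ s') = valF (w0 @ [0,0,0]) + valG (w0 @ [0,0,0]) + 5 * c + valF s'"
    using shiftF[of w0 c] by simp
  have e2: "int (valF (u @ [a])) = int (valF u) + int (valG u) + int a"
    by (simp add: valF_snoc)
  have key: "A0 + B0 + int a = 5 * int c + int (valF s')"
    using e1 e2 g(3) c w0 I0 s'_def by simp
  define t where "t = A0 + B0 + int a"
  define b where "b = (if t < 5 then 0 else 1::nat)"
  have RR: "R (rev (u @ [a])) = (t - 5 * int b, A0 + int a - 3 * int b, w0 @ [b])"
    using R0 by (simp add: t_def b_def Let_def)
  have cb: "c = b" using key c01 sp unfolding b_def t_def by auto
  have "int (valF s') = t - 5 * int b" using key cb t_def by simp
  then have "s' = sel (t - 5 * int b)" using sp by metis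
  then show ?case using RR c cb w0 s'_def by (simp add: W_def S_def)
qed

theorem proposition5p4:
  shows "\<exists>w s. good_ws w s \<and>
     (\<forall>w' s'. good_ws w' s' \<longrightarrow> (\<forall>u \<in> words3. w' u = w u \<and> s' u = s u)) \<and>
     (\<exists>lam. (\<forall>v \<in> words3. v \<noteq> [] \<longrightarrow> lam v \<in> {0::nat, 1}) \<and>
            (\<forall>u \<in> words3. \<forall>a \<in> {0, 1, 2}. w (u @ [a]) = w u @ [lam (u @ [a])]) \<and>
            (\<forall>lam'. ((\<forall>v \<in> words3. v \<noteq> [] \<longrightarrow> lam' v \<in> {0::nat, 1}) \<and>
                     (\<forall>u \<in> words3. \<forall>a \<in> {0, 1, 2}. w (u @ [a]) = w u @ [lam' (u @ [a])]))
                \<longrightarrow> (\<forall>v \<in> words3. v \<noteq> [] \<longrightarrow> lam' v = lam v)))"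
proof (rule exI[of _ W], rule exI[of _ S], rule conjI[OF good_W], rule conjI)
  show "\<forall>w' s'. good_ws w' s' \<longrightarrow> (\<forall>u \<in> words3. w' u = W u \<and> s' u = S u)"
    using uniq by simp
  define lam where "lam v = last (W v)" for v
  show "\<exists>lam. (\<forall>v \<in> words3. v \<noteq> [] \<longrightarrow> lam v \<in> {0::nat, 1}) \<and>
            (\<forall>u \<in> words3. \<forall>a \<in> {0, 1, 2}. W (u @ [a]) = W u @ [lam (u @ [a])]) \<and>
            (\<forall>lam'. ((\<forall>v \<in> words3. v \<noteq> [] \<longrightarrow> lam' v \<in> {0::nat, 1}) \<and>
                     (\<forall>u \<in> words3. \<forall>a \<in> {0, 1, 2}. W (u @ [a]) = W u @ [lam' (u @ [a])]))
                \<longrightarrow> (\<forall>v \<in> words3. v \<noteq> [] \<longrightarrow> lam' v = lam v))"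
  proof (rule exI[of _ lam], intro conjI allI impI ballI)
    fix v assume v: "v \<in> words3" "v \<noteq> []"
    have "W v \<in> words2" "length (W v) = length v" using inv'[OF v(1)] by auto
    then have "last (W v) \<in> set (W v)" "set (W v) \<subseteq> {0,1}" using v(2) unfolding words2_def
      by (auto intro!: last_in_set)
    then show "lam v \<in> {0,1}" unfolding lam_def by blast
  next
    fix u a assume "u \<in> words3" "a \<in> {0::nat,1,2}"
    show "W (u @ [a]) = W u @ [lam (u @ [a])]"
      using W_snoc[of u a] unfolding lam_def by auto
  next
    fix lam' v
    assume h: "(\<forall>v \<in> words3. v \<noteq> [] \<longrightarrow> lam' v \<in> {0::nat, 1}) \<and>
                     (\<forall>u \<in> words3. \<forall>a \<in> {0, 1, 2}. W (u @ [a]) = W u @ [lam' (u @ [a])])"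
      and v: "v \<in> words3" "v \<noteq> []"
    obtain u a where ua: "v = u @ [a]" using v(2) by (metis rev_exhaust)
    have "u \<in> words3" "a \<in> {0,1,2}" using v(1) ua unfolding words3_def by auto
    then have "W v = W u @ [lam' v]" using h ua by auto
    then show "lam' v = lam v" unfolding lam_def by simp
  qed
qed

end
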